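(* Let $G$ be a graph of order $n$ with adjacency eigenvalues $\lambda_1(G)\ge\cdots\ge\lambda_n(G)$, let $F$ be a clique partition of $G$, and let $t_1^F$ be the largest clique-degree of $G$ with respect to $F$. Then $$\lambda_n(G)\ge -t_1^F.$$ Moreover, if equality holds then $\mathrm{rank}(\mathcal M_F)<n$; and if $\mathrm{rank}(\mathcal M_F)<n$ and $G$ is clique-regular with respect to $F$, then equality holds.
   Context: All graphs are finite and simple. A clique of $G$ is a set of pairwise adjacent vertices. A clique partition of $G$ is a set $F=\{C_1,\dots,C_k\}$ of cliques of $G$ such that every edge of $G$ lies in exactly one $C_j$. For $V(G)=\{1,\dots,n\}$, the vertex-clique incidence matrix $\mathcal M_F$ is the $n\times k$ $(0,1)$-matrix whose $(i,j)$-entry is $1$ iff vertex $i\in C_j$. The clique-degree of vertex $i$ is $t_i^F=|\{j: i\in C_j\}|$; $t_1^F$ denotes the largest clique-degree. $G$ is clique-regular (with respect to $F$) if all $t_i^F$ are equal. Eigenvalues of $G$ are those of its adjacency matrix. *)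

theory Defs
  imports "Jordan_Normal_Form.Char_Poly" "Jordan_Normal_Form.DL_Rank"
begin

definition simple_graph :: "nat \<Rightarrow> (nat \<Rightarrow> nat \<Rightarrow> bool) \<Rightarrow> bool" where
  "simple_graph n E \<longleftrightarrow> (\<forall>x y. E x y \<longrightarrow> x < n \<and> y < n \<and> x \<noteq> y \<and> E y x)"

definition adj_mat :: "nat \<Rightarrow> (nat \<Rightarrow> nat \<Rightarrow> bool) \<Rightarrow> real mat" where
  "adj_mat n E = mat n n (\<lambda>(i, j). if E i j then 1 else 0)"

definition least_eigenvalue :: "real mat \<Rightarrow> real" where
  "least_eigenvalue A = Min {k. eigenvalue A k}"

definition is_clique :: "nat \<Rightarrow> (nat \<Rightarrow> nat \<Rightarrow> bool) \<Rightarrow> nat set \<Rightarrow> bool" where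
  "is_clique n E C \<longleftrightarrow> C \<subseteq> {0..<n} \<and> (\<forall>x\<in>C. \<forall>y\<in>C. x \<noteq> y \<longrightarrow> E x y)"

text \<open>A clique partition F = {C_1,...,C_k}, enumerated without repetition by the list Cs.\<close>
definition clique_partition :: "nat \<Rightarrow> (nat \<Rightarrow> nat \<Rightarrow> bool) \<Rightarrow> nat set list \<Rightarrow> bool" where
  "clique_partition n E Cs \<longleftrightarrow> distinct Cs \<and> (\<forall>C\<in>set Cs. is_clique n E C) \<and>
     (\<forall>x y. E x y \<longrightarrow> (\<exists>!j. j < length Cs \<and> x \<in> Cs ! j \<and> y \<in> Cs ! j))"

definition inc_mat :: "nat \<Rightarrow> nat set list \<Rightarrow> real mat" where
  "inc_mat n Cs = mat n (length Cs) (\<lambda>(i, j). if i \<in> Cs ! j then 1 else 0)"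

definition clique_deg :: "nat set list \<Rightarrow> nat \<Rightarrow> nat" where
  "clique_deg Cs i = card {j. j < length Cs \<and> i \<in> Cs ! j}"

definition max_clique_deg :: "nat \<Rightarrow> nat set list \<Rightarrow> nat" where
  "max_clique_deg n Cs = Max (clique_deg Cs ` {0..<n})"

definition clique_regular :: "nat \<Rightarrow> nat set list \<Rightarrow> bool" where
  "clique_regular n Cs \<longleftrightarrow> (\<forall>i<n. \<forall>j<n. clique_deg Cs i = clique_deg Cs j)"

end

theory Submission
  imports Defs "Jordan_Normal_Form.Spectral_Radius"
begin

context vec_space begin

lemma rank_le_n: assumes "B \<in> carrier_mat n m" shows "rank B \<le> n"
proof -
  obtain S where S: "maximal S (\<lambda>T. T \<subseteq> set (cols B) \<and> lin_indpt T)"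
    using maximal_exists[of "(\<lambda>T. T \<subseteq> set (cols B) \<and> lin_indpt T)" "card (set (cols B))" "{}"]
    by (meson List.finite_set card_mono empty_iff empty_subsetI finite_lin_indpt2 rev_finite_subset)
  have c: "set (cols B) \<subseteq> carrier_vec n" using assms cols_dim by blast
  have "card S \<le> dim" using li_le_dim(2)[OF fin_dim, of S] S c unfolding maximal_def by auto
  then show ?thesis using rank_card_indpt[OF assms S] dim_is_n by simp
qed

lemma rank_full_span: assumes "B \<in> carrier_mat n m" "rank B = n"
  shows "span (set (cols B)) = carrier_vec n"
proof -
  obtain S where S: "maximal S (\<lambda>T. T \<subseteq> set (cols B) \<and> lin_indpt T)"
    using maximal_exists[of "(\<lambda>T. T \<subseteq> set (cols B) \<and> lin_indpt T)" "card (set (cols B))" "{}"]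
    by (meson List.finite_set card_mono empty_iff empty_subsetI finite_lin_indpt2 rev_finite_subset)
  have c: "set (cols B) \<subseteq> carrier_vec n" using assms cols_dim by blast
  have SS: "S \<subseteq> set (cols B)" "lin_indpt S" using S unfolding maximal_def by auto
  have fS: "finite S" using SS(1) finite_subset by blast
  have "card S = n" using rank_card_indpt[OF assms(1) S] assms(2) by simp
  then have "basis S" using dim_li_is_basis[OF fin_dim fS _ SS(2)] SS c dim_is_n by auto
  then have "span S = carrier_vec n" unfolding basis_def by auto
  moreover have "span S \<subseteq> span (set (cols B))" using span_is_monotone SS(1) by metis
  moreover have "span (set (cols B)) \<subseteq> carrier_vec n" using c span_closed by auto
  ultimately show ?thesis by auto
qed

lemma span_full_rank: assumes "B \<in> carrier_mat n m" "span (set (cols B)) = carrier_vec n"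
  shows "rank B = n"
proof -
  have "span_vs (set (cols B)) = V" using assms(2) by simp
  then show ?thesis unfolding rank_def using dim_is_n by simp
qed

lemma rank_full_colspace: assumes B: "B \<in> carrier_mat n m" "rank B = n" "v \<in> carrier_vec n"
  shows "\<exists>x\<in>carrier_vec m. B *\<^sub>v x = v"
proof -
  have "v \<in> col_space B" unfolding col_space_def using rank_full_span[OF B(1,2)] B(3) by simp
  then show ?thesis using col_space_eq[OF B(1)] B(1) by auto
qed

lemma colspace_full_rank: assumes B: "B \<in> carrier_mat n m"
  and H: "\<And>v. v \<in> carrier_vec n \<Longrightarrow> \<exists>x\<in>carrier_vec m. B *\<^sub>v x = v"
  shows "rank B = n"
proof -
  have "col_space B = carrier_vec n" using col_space_eq[OF B] B H by auto
  then show ?thesis using span_full_rank[OF B] unfolding col_space_def by simp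
qed

end


lemma sp_mult: fixes B :: "real mat"
  assumes B: "B \<in> carrier_mat n k" and x: "x \<in> carrier_vec k" and v: "v \<in> carrier_vec n"
  shows "v \<bullet> (B *\<^sub>v x) = (\<Sum>c<k. x $ c * (col B c \<bullet> v))"
proof -
  have "v \<bullet> (B *\<^sub>v x) = (\<Sum>i<n. v $ i * (\<Sum>c<k. B $$ (i,c) * x $ c))"
    using B x v by (auto simp: scalar_prod_def lessThan_atLeast0 intro!: sum.cong)
  also have "\<dots> = (\<Sum>c<k. \<Sum>i<n. x $ c * (B $$ (i,c) * v $ i))"
    by (simp add: sum_distrib_left sum.swap[of _ "{..<n}"] mult_ac)
  also have "\<dots> = (\<Sum>c<k. x $ c * (col B c \<bullet> v))"
    using B v by (auto simp: scalar_prod_def sum_distrib_left lessThan_atLeast0 intro!: sum.cong)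
  finally show ?thesis .
qed

lemma self_sp_zero: fixes v :: "real vec"
  assumes "v \<in> carrier_vec n" "v \<bullet> v = 0" shows "v = 0\<^sub>v n"
proof -
  have "(\<Sum>i\<in>{0..<n}. v $ i * v $ i) = 0" using assms by (simp add: scalar_prod_def)
  then have "\<forall>i\<in>{0..<n}. v $ i * v $ i = 0" by (subst sum_nonneg_eq_0_iff[symmetric]) auto
  then show ?thesis using assms(1) by (intro eq_vecI) auto
qed

lemma R2: fixes M :: "real mat"
  assumes M: "M \<in> carrier_mat n k" and v: "v \<in> carrier_vec n" "v \<noteq> 0\<^sub>v n"
   and orth: "\<And>c. c < k \<Longrightarrow> col M c \<bullet> v = 0"
  shows "vec_space.rank n M < n"
proof (rule ccontr)
  assume "\<not> ?thesis"
  with vec_space.rank_le_n[OF M] have r: "vec_space.rank n M = n" by (meson le_neq_implies_less)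
  obtain x where x: "x \<in> carrier_vec k" "v = M *\<^sub>v x" using vec_space.rank_full_colspace[OF M r v(1)] by auto
  have "v \<bullet> v = 0" using sp_mult[OF M x(1) v(1)] orth x(2) by simp
  then show False using self_sp_zero v by blast
qed

lemma R3: fixes M :: "real mat"
  assumes M: "M \<in> carrier_mat n k" and r: "vec_space.rank n M < n"
  shows "\<exists>v \<in> carrier_vec n. v \<noteq> 0\<^sub>v n \<and> (\<forall>c<k. col M c \<bullet> v = 0)"
proof (rule ccontr)
  assume H: "\<not> ?thesis"
  define N where "N = M * M\<^sup>T"
  have N: "N \<in> carrier_mat n n" using M unfolding N_def by auto
  have "det N \<noteq> 0"
  proof
    assume "det N = 0"
    then obtain v where v: "v \<in> carrier_vec n" "v \<noteq> 0\<^sub>v n" "N *\<^sub>v v = 0\<^sub>v n"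
      using det_0_iff_vec_prod_zero_field[OF N] by auto
    have Mt: "M\<^sup>T *\<^sub>v v \<in> carrier_vec k" using M v by auto
    have "N *\<^sub>v v = M *\<^sub>v (M\<^sup>T *\<^sub>v v)" unfolding N_def using M v by (simp add: assoc_mult_mat_vec)
    hence "M *\<^sub>v (M\<^sup>T *\<^sub>v v) = 0\<^sub>v n" using v(3) by simp
    hence "0 = v \<bullet> (M *\<^sub>v (M\<^sup>T *\<^sub>v v))" using v by simp
    also have "\<dots> = (\<Sum>c<k. (col M c \<bullet> v) * (col M c \<bullet> v))"
      using sp_mult[OF M Mt v(1)] M v by (auto intro!: sum.cong simp: row_transpose)
    finally have "\<forall>c\<in>{..<k}. (col M c \<bullet> v) * (col M c \<bullet> v) = 0"
      by (subst sum_nonneg_eq_0_iff[symmetric]) auto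
    then show False using H v by auto
  qed
  hence "vec_space.rank n N = n" using vec_space.det_rank_iff[OF N] by simp
  hence rN: "vec_space.rank n N = n" .
  have "vec_space.rank n M = n"
  proof (rule vec_space.colspace_full_rank[OF M])
    fix y :: "real vec" assume y: "y \<in> carrier_vec n"
    then obtain x where x: "x \<in> carrier_vec n" "y = N *\<^sub>v x" using vec_space.rank_full_colspace[OF N rN y] by auto
    have "y = M *\<^sub>v (M\<^sup>T *\<^sub>v x)" unfolding x N_def using M x by (simp add: assoc_mult_mat_vec)
    moreover have "M\<^sup>T *\<^sub>v x \<in> carrier_vec k" using M x by auto
    ultimately show "\<exists>x\<in>carrier_vec k. M *\<^sub>v x = y" by auto
  qed
  with r show False by simp
qed



lemma sym_real_eig: fixes A :: "real mat"
  assumes A: "A \<in> carrier_mat n n" and n: "n > 0" and sym: "\<And>i j. i < n \<Longrightarrow> j < n \<Longrightarrow> A $$ (i,j) = A $$ (j,i)"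
  shows "\<exists>k. eigenvalue A k"
proof -
  define B where "B = map_mat complex_of_real A"
  have B: "B \<in> carrier_mat n n" using A unfolding B_def by auto
  obtain l where "eigenvalue B l" using spectrum_non_empty[OF B n] unfolding spectrum_def by auto
  then obtain w where w: "w \<in> carrier_vec n" "w \<noteq> 0\<^sub>v n" "B *\<^sub>v w = l \<cdot>\<^sub>v w"
    unfolding eigenvalue_def eigenvector_def using B by auto
  have eq: "(\<Sum>j<n. complex_of_real (A $$ (i,j)) * w $ j) = l * w $ i" if i: "i < n" for i
  proof -
    have "(B *\<^sub>v w) $ i = l * w $ i" using w(3) i w(1) by simp
    moreover have "(B *\<^sub>v w) $ i = (\<Sum>j<n. complex_of_real (A $$ (i,j)) * w $ j)"
      using i A w(1) unfolding B_def by (auto simp: scalar_prod_def lessThan_atLeast0 intro!: sum.cong)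
    ultimately show ?thesis by simp
  qed
  define s where "s = (\<Sum>i<n. cnj (w $ i) * w $ i)"
  define q where "q = (\<Sum>i<n. cnj (w $ i) * (\<Sum>j<n. complex_of_real (A $$ (i,j)) * w $ j))"
  have "q = (\<Sum>i<n. cnj (w $ i) * (l * w $ i))" unfolding q_def by (rule sum.cong) (auto simp: eq)
  hence qs: "q = l * s" unfolding s_def by (simp add: sum_distrib_left mult_ac)
  have "cnj q = (\<Sum>i<n. \<Sum>j<n. w $ i * complex_of_real (A $$ (i,j)) * cnj (w $ j))"
    unfolding q_def by (simp add: sum_distrib_left mult_ac)
  also have "\<dots> = (\<Sum>j<n. \<Sum>i<n. w $ i * complex_of_real (A $$ (i,j)) * cnj (w $ j))"
    by (rule sum.swap)
  also have "\<dots> = q"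
    unfolding q_def by (auto simp: sum_distrib_left mult_ac sym intro!: sum.cong)
  finally have cq: "cnj q = q" .
  have sre: "s = complex_of_real (\<Sum>i<n. (cmod (w $ i))^2)"
    unfolding s_def of_real_sum by (rule sum.cong) (auto simp: complex_norm_square mult.commute simp del: of_real_power)
  obtain i0 where i0: "i0 < n" "w $ i0 \<noteq> 0" using w(1,2) by (metis carrier_vecD eq_vecI index_zero_vec(1,2))
  have "(\<Sum>i<n. (cmod (w $ i))^2) > 0"
    by (rule sum_pos2[of _ i0]) (use i0 in auto)
  hence s0: "s \<noteq> 0" unfolding sre of_real_eq_0_iff by linarith
  have "cnj l * cnj s = l * s" using cq qs by simp
  moreover have "cnj s = s" unfolding sre by (rule complex_cnj_complex_of_real)
  ultimately have "cnj l = l" using s0 by simp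
  hence lre: "Im l = 0" by (metis cnj.sel(2) equal_neg_zero)
  define mu where "mu = Re l"
  have reeq: "(\<Sum>j<n. A $$ (i,j) * Re (w $ j)) = mu * Re (w $ i)" 
    and imeq: "(\<Sum>j<n. A $$ (i,j) * Im (w $ j)) = mu * Im (w $ i)" if i: "i < n" for i
  proof -
    have "Re (\<Sum>j<n. complex_of_real (A $$ (i,j)) * w $ j) = Re (l * w $ i)" using eq[OF i] by simp
    thus "(\<Sum>j<n. A $$ (i,j) * Re (w $ j)) = mu * Re (w $ i)" using lre unfolding mu_def by (simp add: Re_sum)
    have "Im (\<Sum>j<n. complex_of_real (A $$ (i,j)) * w $ j) = Im (l * w $ i)" using eq[OF i] by simp
    thus "(\<Sum>j<n. A $$ (i,j) * Im (w $ j)) = mu * Im (w $ i)" using lre unfolding mu_def by (simp add: Im_sum)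
  qed
  have ev: "eigenvalue A mu" if u: "u = vec n f" "f i0 \<noteq> 0" "\<And>i. i < n \<Longrightarrow> (\<Sum>j<n. A $$ (i,j) * f j) = mu * f i" for u f
  proof -
    have "u \<noteq> 0\<^sub>v n" using u i0 by (metis index_vec index_zero_vec(1))
    moreover have "A *\<^sub>v u = mu \<cdot>\<^sub>v u"
      using A u(1,3) by (intro eq_vecI) (auto simp: scalar_prod_def lessThan_atLeast0 intro!: sum.cong)
    ultimately show ?thesis unfolding eigenvalue_def eigenvector_def using A u(1) by (intro exI[of _ u]) auto
  qed
  show ?thesis
  proof (cases "Re (w $ i0) = 0")
    case False
    then show ?thesis using ev[of "vec n (\<lambda>i. Re (w $ i))" "\<lambda>i. Re (w $ i)"] reeq by auto
  next
    case True
    then have "Im (w $ i0) \<noteq> 0" using i0(2) complex_eq_iff by auto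
    then show ?thesis using ev[of "vec n (\<lambda>i. Im (w $ i))" "\<lambda>i. Im (w $ i)"] imeq by auto
  qed
qed


lemma card_ind: "(\<Sum>c<(k::nat). if P c then 1 else 0) = real (card {c. c < k \<and> P c})"
proof -
  have e: "{c. c < k \<and> P c} = {c\<in>{..<k}. P c}" by auto
  have "real (card {c\<in>{..<k}. P c}) = (\<Sum>c\<in>{c\<in>{..<k}. P c}. 1)" by simp
  also have "\<dots> = (\<Sum>c<k. if P c then 1 else 0)" by (rule sum.inter_filter) simp
  finally show ?thesis unfolding e by simp
qed

lemma key_entry:
  assumes sg: "simple_graph n E" and cp: "clique_partition n E Cs" and i: "i < n" and j: "j < n"
  shows "(\<Sum>c<length Cs. inc_mat n Cs $$ (i,c) * inc_mat n Cs $$ (j,c))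
     = adj_mat n E $$ (i,j) + (if i = j then real (clique_deg Cs i) else 0)"
proof -
  let ?S = "{c. c < length Cs \<and> i \<in> Cs ! c \<and> j \<in> Cs ! c}"
  have "(\<Sum>c<length Cs. inc_mat n Cs $$ (i,c) * inc_mat n Cs $$ (j,c))
      = (\<Sum>c<length Cs. if i \<in> Cs ! c \<and> j \<in> Cs ! c then 1 else 0)"
    using i j unfolding inc_mat_def by (intro sum.cong) auto
  also have "\<dots> = real (card ?S)"
    by (rule card_ind)
  finally have L: "(\<Sum>c<length Cs. inc_mat n Cs $$ (i,c) * inc_mat n Cs $$ (j,c)) = real (card ?S)" .
  have A: "adj_mat n E $$ (i,j) = (if E i j then 1 else 0)" using i j unfolding adj_mat_def by simp
  show ?thesis
  proof (cases "i = j")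
    case True
    then have "\<not> E i j" using sg unfolding simple_graph_def by auto
    then show ?thesis using L A True unfolding clique_deg_def by simp
  next
    case False
    show ?thesis
    proof (cases "E i j")
      case True
      have ex: "\<exists>!c. c < length Cs \<and> i \<in> Cs ! c \<and> j \<in> Cs ! c"
        using cp True unfolding clique_partition_def by blast
      then have "\<exists>c. (c < length Cs \<and> i \<in> Cs ! c \<and> j \<in> Cs ! c) \<and>
          (\<forall>d. d < length Cs \<and> i \<in> Cs ! d \<and> j \<in> Cs ! d \<longrightarrow> d = c)" by (simp only: Ex1_def)
      then obtain c where c: "c < length Cs \<and> i \<in> Cs ! c \<and> j \<in> Cs ! c"
        and u: "\<forall>d. d < length Cs \<and> i \<in> Cs ! d \<and> j \<in> Cs ! d \<longrightarrow> d = c"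
        by blast
      have "?S = {c}" using c u by blast
      then show ?thesis using L A True False by simp
    next
      case nE: False
      have "?S = {}"
      proof (rule ccontr)
        assume "?S \<noteq> {}"
        then obtain c where c: "c < length Cs" "i \<in> Cs ! c" "j \<in> Cs ! c" by auto
        then have "Cs ! c \<in> set Cs" by simp
        then have "is_clique n E (Cs ! c)" using cp unfolding clique_partition_def by blast
        then show False using c False nE unfolding is_clique_def by auto
      qed
      then show ?thesis using L A nE False by simp
    qed
  qed
qed


theorem mainTheorem1:
  fixes n :: nat and E :: "nat \<Rightarrow> nat \<Rightarrow> bool" and Cs :: "nat set list"
  assumes "n \<ge> 1" and "simple_graph n E" and "clique_partition n E Cs"
  shows "least_eigenvalue (adj_mat n E) \<ge> - real (max_clique_deg n Cs)
    \<and> (least_eigenvalue (adj_mat n E) = - real (max_clique_deg n Cs)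
           \<longrightarrow> vec_space.rank n (inc_mat n Cs) < n)
    \<and> (vec_space.rank n (inc_mat n Cs) < n \<and> clique_regular n Cs
           \<longrightarrow> least_eigenvalue (adj_mat n E) = - real (max_clique_deg n Cs))"
proof -
  define A where "A = adj_mat n E"
  define M where "M = inc_mat n Cs"
  define k where "k = length Cs"
  define t where "t = (\<lambda>i. real (clique_deg Cs i))"
  define T where "T = real (max_clique_deg n Cs)"
  have Ac: "A \<in> carrier_mat n n" unfolding A_def adj_mat_def by simp
  have Mc: "M \<in> carrier_mat n k" unfolding M_def inc_mat_def k_def by simp
  have sym: "A $$ (i,j) = A $$ (j,i)" if "i < n" "j < n" for i j
    using assms(2) that unfolding A_def adj_mat_def simple_graph_def by auto
  have tT: "t i \<le> T" if "i < n" for i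
    unfolding t_def T_def max_clique_deg_def using that by simp
  have key: "(\<Sum>c<k. M $$ (i,c) * M $$ (j,c)) = A $$ (i,j) + (if i = j then t i else 0)"
    if "i < n" "j < n" for i j
    using key_entry[OF assms(2,3) that] unfolding M_def A_def k_def t_def .
  define p where "p v c = col M c \<bullet> v" for v c
  have pexp: "p v c = (\<Sum>i<n. M $$ (i,c) * v $ i)" if "v \<in> carrier_vec n" "c < k" for v c
    unfolding p_def using that Mc by (auto simp: scalar_prod_def lessThan_atLeast0 intro!: sum.cong)
  have Av: "(A *\<^sub>v v) $ i = (\<Sum>j<n. A $$ (i,j) * v $ j)" if "v \<in> carrier_vec n" "i < n" for v i
    using that Ac by (auto simp: scalar_prod_def lessThan_atLeast0 intro!: sum.cong)
  have lin: "(\<Sum>c<k. M $$ (i,c) * p v c) = (A *\<^sub>v v) $ i + t i * v $ i"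
    if v: "v \<in> carrier_vec n" and i: "i < n" for v i
  proof -
    have "(\<Sum>c<k. M $$ (i,c) * p v c) = (\<Sum>c<k. \<Sum>j<n. M $$ (i,c) * (M $$ (j,c) * v $ j))"
      using pexp[OF v] by (simp add: sum_distrib_left)
    also have "\<dots> = (\<Sum>j<n. (\<Sum>c<k. M $$ (i,c) * M $$ (j,c)) * v $ j)"
      by (subst sum.swap) (simp add: sum_distrib_left sum_distrib_right mult_ac)
    also have "\<dots> = (\<Sum>j<n. A $$ (i,j) * v $ j + (if i = j then t i * v $ j else 0))"
      using key[OF i] by (intro sum.cong) (auto simp: distrib_right)
    also have "\<dots> = (\<Sum>j<n. A $$ (i,j) * v $ j) + t i * v $ i"
      using i by (simp add: sum.distrib)
    finally show ?thesis using Av[OF v i] by simp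
  qed
  have quad: "(\<Sum>c<k. (p v c)^2) = (\<Sum>i<n. v $ i * (A *\<^sub>v v) $ i) + (\<Sum>i<n. t i * (v $ i)^2)"
    if v: "v \<in> carrier_vec n" for v
  proof -
    have "(\<Sum>c<k. (p v c)^2) = (\<Sum>c<k. \<Sum>i<n. p v c * (M $$ (i,c) * v $ i))"
      using pexp[OF v] by (simp add: power2_eq_square sum_distrib_left)
    also have "\<dots> = (\<Sum>i<n. v $ i * (\<Sum>c<k. M $$ (i,c) * p v c))"
      by (subst sum.swap) (simp add: sum_distrib_left mult_ac)
    also have "\<dots> = (\<Sum>i<n. v $ i * (A *\<^sub>v v) $ i + t i * (v $ i)^2)"
      using lin[OF v] by (intro sum.cong) (auto simp: algebra_simps power2_eq_square)
    finally show ?thesis by (simp add: sum.distrib)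
  qed
  have eig: "l \<ge> - T \<and> (l = - T \<longrightarrow> (\<forall>c<k. p v c = 0))"
    if ev: "eigenvector A v l" for v l
  proof -
    have v: "v \<in> carrier_vec n" "v \<noteq> 0\<^sub>v n" "A *\<^sub>v v = l \<cdot>\<^sub>v v" using ev Ac unfolding eigenvector_def by auto
    obtain i0 where i0: "i0 < n" "v $ i0 \<noteq> 0" using v(1,2) by (metis carrier_vecD eq_vecI index_zero_vec(1,2))
    define s where "s = (\<Sum>i<n. (v $ i)^2)"
    have s0: "s > 0" unfolding s_def by (rule sum_pos2[of _ i0]) (use i0 in auto)
    have "(\<Sum>c<k. (p v c)^2) = (\<Sum>i<n. (l + t i) * (v $ i)^2)"
      unfolding quad[OF v(1)] sum.distrib[symmetric] using v(1,3)
      by (intro sum.cong) (auto simp: algebra_simps power2_eq_square)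
    also have "\<dots> \<le> (\<Sum>i<n. (l + T) * (v $ i)^2)"
      using tT by (intro sum_mono mult_right_mono) auto
    also have "\<dots> = (l + T) * s" unfolding s_def by (simp add: sum_distrib_left)
    finally have le: "(\<Sum>c<k. (p v c)^2) \<le> (l + T) * s" .
    have ge: "(\<Sum>c<k. (p v c)^2) \<ge> 0" by (intro sum_nonneg) auto
    have "l + T \<ge> 0"
    proof (rule ccontr)
      assume "\<not> l + T \<ge> 0"
      then have "(l + T) * s < 0" using s0 by (simp add: mult_neg_pos)
      then show False using le ge by linarith
    qed
    moreover have "(\<forall>c<k. p v c = 0)" if "l = - T"
    proof -
      have "(\<Sum>c<k. (p v c)^2) = 0" using le ge that by simp
      then have "\<forall>c\<in>{..<k}. (p v c)^2 = 0" by (subst sum_nonneg_eq_0_iff[symmetric]) auto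
      then show ?thesis by simp
    qed
    ultimately show ?thesis by simp
  qed
  define S where "S = {l. eigenvalue A l}"
  have finS: "finite S" using card_finite_spectrum(1)[OF Ac] unfolding S_def spectrum_def .
  have neS: "S \<noteq> {}" using sym_real_eig[OF Ac _ sym] assms(1) unfolding S_def by auto
  have LE: "least_eigenvalue (adj_mat n E) = Min S" unfolding least_eigenvalue_def S_def A_def ..
  have P1: "Min S \<ge> - T"
    using finS neS eig unfolding S_def eigenvalue_def by (auto simp: Min_ge_iff)
  have P2: "vec_space.rank n M < n" if "Min S = - T"
  proof -
    have "- T \<in> S" using Min_in[OF finS neS] that by simp
    then obtain v where "eigenvector A v (- T)" using that unfolding S_def eigenvalue_def by auto
    then have "v \<in> carrier_vec n" "v \<noteq> 0\<^sub>v n" "\<forall>c<k. p v c = 0"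
      using eig Ac unfolding eigenvector_def by auto
    then show ?thesis using R2[OF Mc] unfolding p_def by blast
  qed
  have P3: "Min S = - T" if r: "vec_space.rank n M < n" and reg: "clique_regular n Cs"
  proof -
    obtain v where v: "v \<in> carrier_vec n" "v \<noteq> 0\<^sub>v n" "\<forall>c<k. col M c \<bullet> v = 0"
      using R3[OF Mc r] by blast
    have n0: "0 < n" using assms(1) by simp
    have eq0: "clique_deg Cs i = clique_deg Cs 0" if "i < n" for i
      using reg n0 that unfolding clique_regular_def by blast
    have "clique_deg Cs ` {0..<n} = (\<lambda>_. clique_deg Cs 0) ` {0..<n}"
      by (rule image_cong) (simp, rule eq0, simp)
    also have "\<dots> = {clique_deg Cs 0}" using assms(1) by (simp add: image_constant_conv)
    finally have im: "clique_deg Cs ` {0..<n} = {clique_deg Cs 0}" .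
    have tTe: "t i = T" if "i < n" for i
      unfolding t_def T_def max_clique_deg_def im using eq0[OF that] by simp
    have "A *\<^sub>v v = (- T) \<cdot>\<^sub>v v"
    proof (rule eq_vecI)
      fix i assume "i < dim_vec ((- T) \<cdot>\<^sub>v v)"
      then have i: "i < n" using v by simp
      have "(\<Sum>c<k. M $$ (i,c) * p v c) = 0" using v(3) unfolding p_def by simp
      then show "(A *\<^sub>v v) $ i = ((- T) \<cdot>\<^sub>v v) $ i" using lin[OF v(1) i] tTe[OF i] i v(1) by simp
    qed (use Ac v in simp)
    then have "- T \<in> S" unfolding S_def eigenvalue_def eigenvector_def using v Ac by auto
    then have "Min S \<le> - T" using finS by simp
    then show ?thesis using P1 by simp
  qed
  show ?thesis unfolding LE using P1 P2 P3 unfolding T_def M_def by blast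
qed


end
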